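(* Every semicommutative ring is almost Armendariz.
   Context: All rings are associative with identity. A ring $R$ is semicommutative if for all $a,b\in R$, $ab=0$ implies $aRb=0$. For a ring $R$, $P(R)$ denotes the prime radical of $R$ (the intersection of all prime ideals of $R$, equivalently the set of strongly nilpotent elements of $R$). A ring $R$ is called almost Armendariz if whenever $f(x)=\sum_{i=0}^m a_ix^i$ and $g(x)=\sum_{j=0}^n b_jx^j\in R[x]$ satisfy $f(x)g(x)=0$, then $a_ib_j\in P(R)$ for all $0\le i\le m$, $0\le j\le n$. *)

theory Defs
  imports Main
begin

text \<open>Polynomials over a noncommutative ring are represented by coefficient functions
  with an explicit degree bound, since the library type poly needs commutativity
  for multiplication.\<close>

definition semicommutative :: "'a::ring_1 itself \<Rightarrow> bool" where
  "semicommutative _ \<longleftrightarrow> (\<forall>a b :: 'a. a * b = 0 \<longrightarrow> (\<forall>r. a * r * b = 0))"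

definition two_sided_ideal :: "'a::ring_1 set \<Rightarrow> bool" where
  "two_sided_ideal I \<longleftrightarrow> 0 \<in> I \<and> (\<forall>x\<in>I. \<forall>y\<in>I. x + y \<in> I) \<and> (\<forall>x\<in>I. - x \<in> I)
     \<and> (\<forall>x\<in>I. \<forall>r. r * x \<in> I \<and> x * r \<in> I)"

text \<open>Prime ideal: proper ideal P such that for ideals A, B with AB \<subseteq> P,
  A \<subseteq> P or B \<subseteq> P (AB \<subseteq> P iff all products ab lie in P, as P is additively closed).\<close>
definition prime_ideal :: "'a::ring_1 set \<Rightarrow> bool" where
  "prime_ideal P \<longleftrightarrow> two_sided_ideal P \<and> P \<noteq> UNIV \<and>
     (\<forall>A B. two_sided_ideal A \<and> two_sided_ideal B \<and> (\<forall>a\<in>A. \<forall>b\<in>B. a * b \<in> P)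
        \<longrightarrow> A \<subseteq> P \<or> B \<subseteq> P)"

definition prime_radical :: "'a::ring_1 itself \<Rightarrow> 'a set" where
  "prime_radical _ = \<Inter> {P. prime_ideal P}"

text \<open>Product of f = sum_{i\<le>m} a_i x^i and g = sum_{j\<le>n} b_j x^j is zero.\<close>
definition poly_prod_zero :: "(nat \<Rightarrow> 'a::ring_1) \<Rightarrow> nat \<Rightarrow> (nat \<Rightarrow> 'a) \<Rightarrow> nat \<Rightarrow> bool" where
  "poly_prod_zero a m b n \<longleftrightarrow>
     (\<forall>k. (\<Sum>p\<in>{(i, j). i \<le> m \<and> j \<le> n \<and> i + j = k}. a (fst p) * b (snd p)) = 0)"

definition almost_armendariz :: "'a::ring_1 itself \<Rightarrow> bool" where
  "almost_armendariz T \<longleftrightarrow>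
     (\<forall>(a :: nat \<Rightarrow> 'a) m b n. poly_prod_zero a m b n \<longrightarrow>
        (\<forall>i\<le>m. \<forall>j\<le>n. a i * b j \<in> prime_radical T))"

end

theory Submission
  imports Defs
begin


inductive hasA :: "'a::ring_1 \<Rightarrow> nat \<Rightarrow> 'a \<Rightarrow> bool" for x where
  h0: "hasA x 0 y"
| hS: "hasA x k y \<Longrightarrow> hasA x (Suc k) (r * x * y)"

lemma hasA_lmult: "hasA x k y \<Longrightarrow> hasA x k (s * y)"
proof (induction rule: hasA.induct)
  case (h0 y) show ?case by (rule hasA.h0)
next
  case (hS k y r)
  have "hasA x (Suc k) ((s*r) * x * y)" using hS(1) by (rule hasA.hS)
  then show ?case by (simp add: mult.assoc)
qed

lemma hasA_Suc: "hasA x (Suc k) y \<Longrightarrow> hasA x k y"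
proof (induction k arbitrary: y)
  case 0 show ?case by (rule hasA.h0)
next
  case (Suc k)
  from Suc.prems obtain r y' where "y = r * x * y'" "hasA x (Suc k) y'"
    by (cases rule: hasA.cases) auto
  then show ?case using Suc.IH hasA.hS by blast
qed

lemma hasA_le: "k \<le> k' \<Longrightarrow> hasA x k' y \<Longrightarrow> hasA x k y"
proof (induction k' rule: dec_induct)
  case base then show ?case by simp
next
  case (step n) then show ?case using hasA_Suc by blast
qed

locale semic =
  assumes sc: "\<And>x y r. x * y = 0 \<Longrightarrow> x * r * y = (0::'a::ring_1)"
begin

lemma hasA_zero_gen: "hasA (x::'a) k y \<Longrightarrow> x ^ (j + k) = 0 \<Longrightarrow> x ^ j * y = 0"
proof (induction arbitrary: j rule: hasA.induct)
  case (h0 y) then show ?case by simp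
next
  case (hS k y r)
  have "x ^ (Suc j + k) = 0" using hS.prems by simp
  then have "x ^ Suc j * y = 0" by (rule hS.IH)
  moreover have "x ^ j * (x * y) = x ^ Suc j * y" by (simp only: power_Suc2 mult.assoc)
  ultimately have "x ^ j * (x * y) = 0" by simp
  then have "x ^ j * r * (x * y) = 0" by (rule sc)
  then show ?case by (simp add: mult.assoc)
qed

lemma hasA_zero: "x ^ n = 0 \<Longrightarrow> hasA (x::'a) n y \<Longrightarrow> y = 0"
  using hasA_zero_gen[of x n y 0] by simp

end
fun wp :: "'b::ring_1 \<Rightarrow> 'b \<Rightarrow> bool list \<Rightarrow> 'b" where
  "wp a b [] = 1"
| "wp a b (c # w) = (if c then a else b) * wp a b w"

lemma fin_bl: "finite {w::bool list. length w = N}"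
  using finite_lists_length_eq[of "UNIV::bool set" N] by simp

lemma bl_Suc: "{w::bool list. length w = Suc N} =
   Cons True ` {w. length w = N} \<union> Cons False ` {w. length w = N}"
proof (intro set_eqI iffI)
  fix w :: "bool list" assume "w \<in> {w. length w = Suc N}"
  then obtain c v where "w = c # v" "length v = N" by (cases w) auto
  then show "w \<in> Cons True ` {w. length w = N} \<union> Cons False ` {w. length w = N}"
    by (cases c) auto
qed auto

lemma power_expand: "((a::'b::ring_1) + b) ^ N = (\<Sum>w\<in>{w. length w = N}. wp a b w)"
proof (induction N)
  case 0
  have "{w::bool list. length w = 0} = {[]}" by auto
  then show ?case by simp
next
  case (Suc N)
  let ?L = "{w::bool list. length w = N}"
  have "(\<Sum>w\<in>{w. length w = Suc N}. wp a b w) =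
     (\<Sum>w\<in>Cons True ` ?L. wp a b w) + (\<Sum>w\<in>Cons False ` ?L. wp a b w)"
    unfolding bl_Suc by (rule sum.union_disjoint) (auto simp: fin_bl)
  also have "\<dots> = (\<Sum>w\<in>?L. a * wp a b w) + (\<Sum>w\<in>?L. b * wp a b w)"
    by (simp add: sum.reindex)
  also have "\<dots> = (a + b) * (a + b) ^ N"
    by (simp add: Suc.IH sum_distrib_left distrib_right sum.distrib)
  finally show ?case by simp
qed

lemma wp_hasA1: "hasA a (length (filter (\<lambda>c. c) w)) (wp a b w)"
proof (induction w)
  case Nil show ?case by (simp add: hasA.h0)
next
  case (Cons c w)
  show ?case
  proof (cases c)
    case True
    have "hasA a (Suc (length (filter (\<lambda>c. c) w))) (1 * a * wp a b w)"
      by (rule hasA.hS[OF Cons.IH])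
    then show ?thesis using True by simp
  next
    case False then show ?thesis using hasA_lmult[OF Cons.IH] by simp
  qed
qed

lemma wp_hasA2: "hasA b (length (filter Not w)) (wp a b w)"
proof (induction w)
  case Nil show ?case by (simp add: hasA.h0)
next
  case (Cons c w)
  show ?case
  proof (cases c)
    case False
    have "hasA b (Suc (length (filter Not w))) (1 * b * wp a b w)"
      by (rule hasA.hS[OF Cons.IH])
    then show ?thesis using False by simp
  next
    case True then show ?thesis using hasA_lmult[OF Cons.IH] by simp
  qed
qed

lemma filter_count: "length (filter (\<lambda>c. c) w) + length (filter Not w) = length w"
  by (induction w) auto

lemma swap_pow: "((y::'b::ring_1) * x) ^ Suc n = y * (x * y) ^ n * x"
proof (induction n)
  case 0 then show ?case by simp
next
  case (Suc n)
  have "(y * x) ^ Suc (Suc n) = (y * x) * (y * x) ^ Suc n" by (rule power_Suc)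
  also have "\<dots> = y * (x * y * (x * y) ^ n) * x" using Suc.IH by (simp add: mult.assoc)
  also have "\<dots> = y * (x * y) ^ Suc n * x" by simp
  finally show ?case .
qed

definition nilp :: "'b::ring_1 \<Rightarrow> bool" where "nilp x \<longleftrightarrow> (\<exists>n. x ^ n = 0)"

lemma nilp_swap: "nilp (x * y) \<Longrightarrow> nilp (y * x)"
proof -
  assume "nilp (x * y)"
  then obtain n where "(x * y) ^ n = 0" unfolding nilp_def by blast
  then have "(y * x) ^ Suc n = 0" unfolding swap_pow by simp
  then show ?thesis unfolding nilp_def by blast
qed

lemma nilp_sq: "nilp (x * x) \<Longrightarrow> nilp x"
proof -
  assume "nilp (x * x)"
  then obtain n where "(x * x) ^ n = 0" unfolding nilp_def by blast
  then have "x ^ (2 * n) = 0" by (simp add: power_mult power2_eq_square)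
  then show ?thesis unfolding nilp_def by blast
qed

lemma nilp_minus: "nilp x \<Longrightarrow> nilp (- x)"
proof -
  assume "nilp x"
  then obtain n where "x ^ n = 0" unfolding nilp_def by blast
  then have "(- x) ^ n = 0" by (simp add: power_minus[of x n])
  then show ?thesis unfolding nilp_def by blast
qed

lemma nilp_zero: "nilp 0"
  unfolding nilp_def by (rule exI[of _ 1]) simp

context semic begin

lemma hasA_lpow: "hasA x k (((r::'a) * x) ^ k)"
proof (induction k)
  case 0 show ?case by (rule hasA.h0)
next
  case (Suc k)
  have "hasA x (Suc k) (r * x * (r * x) ^ k)" by (rule hasA.hS[OF Suc.IH])
  then show ?case by (simp add: power_Suc)
qed

lemma nilp_lmult: "nilp (x::'a) \<Longrightarrow> nilp (r * x)"
  unfolding nilp_def using hasA_lpow hasA_zero by blast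

lemma nilp_rmult: "nilp (x::'a) \<Longrightarrow> nilp (x * r)"
  using nilp_lmult nilp_swap by blast

lemma nilp_add: "nilp (a::'a) \<Longrightarrow> nilp b \<Longrightarrow> nilp (a + b)"
proof -
  assume "nilp a" "nilp b"
  then obtain n m where n: "a ^ n = 0" and m: "b ^ m = 0" unfolding nilp_def by blast
  have "(a + b) ^ (n + m) = 0"
    unfolding power_expand
  proof (rule sum.neutral, safe)
    fix w :: "bool list" assume len: "length w = n + m"
    show "wp a b w = 0"
    proof (cases "n \<le> length (filter (\<lambda>c. c) w)")
      case True
      then have "hasA a n (wp a b w)" using hasA_le wp_hasA1 by blast
      then show ?thesis using hasA_zero n by blast
    next
      case False
      then have "m \<le> length (filter Not w)" using filter_count[of w] len by linarith
      then have "hasA b m (wp a b w)" using hasA_le wp_hasA2 by blast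
      then show ?thesis using hasA_zero m by blast
    qed
  qed
  then show ?thesis unfolding nilp_def by blast
qed

lemma nilp_sum: "finite S \<Longrightarrow> (\<And>i. i \<in> S \<Longrightarrow> nilp (f i :: 'a)) \<Longrightarrow> nilp (sum f S)"
  by (induction S rule: finite_induct) (auto intro: nilp_add nilp_zero)

end

lemma prime_L:
  assumes P: "prime_ideal (P::'b::ring_1 set)" and uv: "\<And>r. u * r * v \<in> P"
  shows "u \<in> P \<or> v \<in> P"
proof -
  have I: "two_sided_ideal P" using P unfolding prime_ideal_def by blast
  have z: "0 \<in> P" and ad: "\<And>x y. x\<in>P \<Longrightarrow> y\<in>P \<Longrightarrow> x+y\<in>P"
    and ng: "\<And>x. x\<in>P \<Longrightarrow> -x\<in>P"
    and lm: "\<And>x r. x\<in>P \<Longrightarrow> r*x\<in>P" and rm: "\<And>x r. x\<in>P \<Longrightarrow> x*r\<in>P"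
    using I unfolding two_sided_ideal_def by blast+
  define A where "A = {y. \<forall>r. y*r*v \<in> P}"
  define B where "B = {b. \<forall>a\<in>A. \<forall>s. a*s*b \<in> P}"
  have IA: "two_sided_ideal A" unfolding two_sided_ideal_def A_def
  proof (safe)
    fix r show "0 * r * v \<in> P" using z by simp
  next
    fix x y r assume "\<forall>r. x*r*v \<in> P" "\<forall>r. y*r*v \<in> P"
    then show "(x+y)*r*v \<in> P" using ad by (simp add: distrib_right)
  next
    fix x r assume "\<forall>r. x*r*v \<in> P"
    then show "(-x)*r*v \<in> P" using ng by simp
  next
    fix x r s assume "\<forall>r. x*r*v \<in> P"
    then show "r*x*s*v \<in> P" using lm[of "x*s*v" r] by (simp add: mult.assoc)
  next
    fix x r s assume "\<forall>r. x*r*v \<in> P"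
    then have "x*(r*s)*v \<in> P" by blast
    then show "x*r*s*v \<in> P" by (simp add: mult.assoc)
  qed
  have IB: "two_sided_ideal B" unfolding two_sided_ideal_def B_def
  proof (safe)
    fix a s show "a * s * 0 \<in> P" using z by simp
  next
    fix x y a s assume "\<forall>a\<in>A. \<forall>s. a*s*x \<in> P" "\<forall>a\<in>A. \<forall>s. a*s*y \<in> P" "a \<in> A"
    then show "a*s*(x+y) \<in> P" using ad by (simp add: distrib_left)
  next
    fix x a s assume "\<forall>a\<in>A. \<forall>s. a*s*x \<in> P" "a \<in> A"
    then show "a*s*(-x) \<in> P" using ng by simp
  next
    fix x r a s assume "\<forall>a\<in>A. \<forall>s. a*s*x \<in> P" "a \<in> A"
    then have "a*(s*r)*x \<in> P" by blast
    then show "a*s*(r*x) \<in> P" by (simp add: mult.assoc)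
  next
    fix x r a s assume "\<forall>a\<in>A. \<forall>s. a*s*x \<in> P" "a \<in> A"
    then show "a*s*(x*r) \<in> P" using rm[of "a*s*x" r] by (simp add: mult.assoc)
  qed
  have AB: "\<forall>a\<in>A. \<forall>b\<in>B. a * b \<in> P" 
  proof (intro ballI)
    fix a c assume "a \<in> A" "c \<in> B"
    then have "a * 1 * c \<in> P" unfolding B_def by blast
    then show "a * c \<in> P" by simp
  qed
  have "A \<subseteq> P \<or> B \<subseteq> P" using P IA IB AB unfolding prime_ideal_def by blast
  moreover have "u \<in> A" using uv A_def by blast
  moreover have "v \<in> B" unfolding B_def A_def by blast
  ultimately show ?thesis by blast
qed

context semic begin

lemma hasA_xrx: "hasA x (2*m) (((x::'a) * r * x) ^ m)"
proof (induction m)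
  case 0 show ?case by (simp add: hasA.h0)
next
  case (Suc m)
  have "hasA x (Suc (2*m)) (r * x * (x*r*x)^m)" by (rule hasA.hS[OF Suc.IH])
  then have "hasA x (Suc (Suc (2*m))) (1 * x * (r * x * (x*r*x)^m))" by (rule hasA.hS)
  then show ?case by (simp add: mult.assoc)
qed

lemma nil_in_prime:
  assumes P: "prime_ideal (P::'a set)"
  shows "x ^ n = 0 \<Longrightarrow> x \<in> P"
proof (induction n arbitrary: x rule: less_induct)
  case (less n x)
  have I: "two_sided_ideal P" and nu: "P \<noteq> UNIV" using P unfolding prime_ideal_def by blast+
  have z: "0 \<in> P" using I unfolding two_sided_ideal_def by blast
  show ?case
  proof (cases "n \<le> 1")
    case True
    then consider "n = 0" | "n = 1" by linarith
    then show ?thesis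
    proof cases
      case 1
      then have "(1::'a) = 0" using less.prems by simp
      then have all0: "\<And>y::'a. y = 0" proof -
        fix y :: 'a have "y = y * 1" by simp
        also have "\<dots> = 0" using \<open>(1::'a) = 0\<close> by simp
        finally show "y = 0" .
      qed
      have "\<forall>y. y \<in> P" using all0 z by metis
      then have "P = UNIV" by blast
      then show ?thesis using nu by blast
    next
      case 2 then show ?thesis using less.prems z by simp
    qed
  next
    case False
    define m where "m = (n + 1) div 2"
    have mn: "m < n" "n \<le> 2*m" using False unfolding m_def by auto
    have "\<And>r. x * r * x \<in> P"
    proof -
      fix r
      have x2: "x ^ (2*m) = 0" using less.prems mn
      proof -
        have "x ^ (2*m) = x ^ (2*m - n) * x ^ n" using mn(2) by (simp add: power_add[symmetric])
        then show ?thesis using less.prems by simp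
      qed
      have "(x*r*x) ^ m = 0" using hasA_xrx hasA_zero[OF x2] by blast
      then show "x * r * x \<in> P" using less.IH[OF mn(1)] by blast
    qed
    then show ?thesis using prime_L[OF P] by blast
  qed
qed

end



context semic begin

lemma conv:
  fixes a b :: "nat \<Rightarrow> 'a"
  assumes "poly_prod_zero a m b n"
  shows "(\<Sum>i\<in>{..k}. (if i \<le> m then a i else 0) * (if k - i \<le> n then b (k - i) else 0)) = 0"
proof -
  define S where "S = {i. i \<le> k \<and> i \<le> m \<and> k - i \<le> n}"
  have "(\<Sum>i\<in>{..k}. (if i \<le> m then a i else 0) * (if k - i \<le> n then b (k - i) else 0))
      = (\<Sum>i\<in>{..k}. if i \<in> S then a i * b (k - i) else 0)"
    by (rule sum.cong) (auto simp: S_def)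
  also have "\<dots> = (\<Sum>i\<in>S. a i * b (k - i))"
    by (simp add: sum.inter_filter[symmetric] S_def)
  also have "\<dots> = (\<Sum>p\<in>(\<lambda>i. (i, k - i)) ` S. a (fst p) * b (snd p))"
    by (subst sum.reindex) (auto simp: inj_on_def)
  also have "(\<lambda>i. (i, k - i)) ` S = {(i, j). i \<le> m \<and> j \<le> n \<and> i + j = k}"
    unfolding S_def by (auto simp: image_iff) 
  finally show ?thesis using assms unfolding poly_prod_zero_def by simp
qed

lemma main:
  fixes A B :: "nat \<Rightarrow> 'a"
  assumes eq: "\<And>k. (\<Sum>i\<in>{..k}. A i * B (k - i)) = 0"
  shows "\<forall>i j. i + j = k \<longrightarrow> nilp (A i * B j)"
proof (induction k rule: less_induct)
  case (less k)
  note outer = less.IH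
  have "\<forall>t. t \<le> k \<longrightarrow> nilp (A (k - t) * B t)"
  proof (intro allI)
    fix t show "t \<le> k \<longrightarrow> nilp (A (k - t) * B t)"
    proof (induction t rule: less_induct)
      case (less t)
      show ?case
      proof
        assume tk: "t \<le> k"
        have fin: "finite ({..k} - {k - t})" by simp
        have rest: "nilp (\<Sum>i\<in>{..k} - {k - t}. B t * (A i * B (k - i)))"
        proof (rule nilp_sum[OF fin])
          fix i assume i: "i \<in> {..k} - {k - t}"
          show "nilp (B t * (A i * B (k - i)))"
          proof (cases "i > k - t")
            case True
            then have "k - i < t" "k - i \<le> k" using i tk by auto
            then have "nilp (A (k - (k - i)) * B (k - i))" using less.IH by blast
            moreover have "k - (k - i) = i" using i by auto
            ultimately show ?thesis using nilp_lmult by simp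
          next
            case False
            then have "i + t < k" using i tk by auto
            then have "nilp (A i * B t)" using outer[of "i + t"] by blast
            then have "nilp (B t * A i)" by (rule nilp_swap)
            then have "nilp (B t * A i * B (k - i))" by (rule nilp_rmult)
            then show ?thesis by (simp add: mult.assoc)
          qed
        qed
        have "0 = B t * (\<Sum>i\<in>{..k}. A i * B (k - i))" using eq by simp
        also have "\<dots> = (\<Sum>i\<in>{..k}. B t * (A i * B (k - i)))" by (simp add: sum_distrib_left)
        also have "\<dots> = B t * (A (k - t) * B (k - (k - t))) + (\<Sum>i\<in>{..k} - {k - t}. B t * (A i * B (k - i)))"
          by (rule sum.remove) auto
        also have "k - (k - t) = t" using tk by simp
        finally have "B t * (A (k - t) * B t) = - (\<Sum>i\<in>{..k} - {k - t}. B t * (A i * B (k - i)))"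
          by (simp add: eq_neg_iff_add_eq_0)
        then have "nilp (B t * (A (k - t) * B t))" using nilp_minus[OF rest] by simp
        then have "nilp (A (k - t) * (B t * (A (k - t) * B t)))" by (rule nilp_lmult)
        then have "nilp ((A (k - t) * B t) * (A (k - t) * B t))" by (simp add: mult.assoc)
        then show "nilp (A (k - t) * B t)" by (rule nilp_sq)
      qed
    qed
  qed
  then show ?case by (metis add_diff_cancel_right' le_add2)
qed

end

theorem proposition2p8:
  assumes "semicommutative TYPE('a::ring_1)"
  shows "almost_armendariz TYPE('a)"
proof -
  interpret semic
    using assms unfolding semicommutative_def semic_def by blast
  show ?thesis unfolding almost_armendariz_def
  proof (intro allI impI)
    fix a :: "nat \<Rightarrow> 'a" and m b n i j
    assume pz: "poly_prod_zero a m b n" and ij: "i \<le> m" "j \<le> n"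
    define A where "A i = (if i \<le> m then a i else 0)" for i
    define B where "B j = (if j \<le> n then b j else 0)" for j
    have eq: "\<And>k. (\<Sum>i\<in>{..k}. A i * B (k - i)) = 0" unfolding A_def B_def by (rule conv[OF pz])
    have "nilp (A i * B j)" using main[OF eq, of "i + j"] by blast
    then obtain N where N: "(a i * b j) ^ N = 0" using ij unfolding nilp_def A_def B_def by auto
    show "a i * b j \<in> prime_radical TYPE('a)"
      unfolding prime_radical_def using nil_in_prime[OF _ N] by blast
  qed
qed

end
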